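(* If $v\in\widehat T_n\setminus\{e\}$, then there exist $w',w''\in E_n$ with $w'\succeq\mathrm{par}(v)$, $w''\succeq v$ and $$c\big[\|\mathrm{conf}(w')\|_{L,r}+\|\mathrm{conf}(w'')\|_{L,r}\big]<\|d(\hat p_n(\cdot|w'),\hat p_n(\cdot|w''))\|_{L,k}.$$
   Context: $A$ is a finite alphabet; strings $w=w_{-j}\cdots w_{-1}$ over $A$; $e$ is the empty string; $w\preceq w'$ ($w'\succeq w$) means $w$ is a suffix of $w'$; $\mathrm{par}(w_{-j}\cdots w_{-1})=w_{-j+1}\cdots w_{-1}$. A tree is a set of strings containing $e$ and closed under $\mathrm{par}$; a leaf is an element that is the parent of no element. Data: for $\ell=1,\dots,L$ a sample $X_1^n(\ell)\in A^n$; $N_{j,\ell}(w)$ is the number of occurrences of $w$ as a block of consecutive symbols in $X_1^j(\ell)$; $\hat p_{n,\ell}(a|w)=N_{n,\ell}(wa)/N_{n-1,\ell}(w)$ when $\min_\ell N_{n-1,\ell}(w)>0$. Metrics $d_\ell$ on distributions over $A$, $d(q,q')=(d_\ell(q_\ell,q'_\ell))_\ell$, $\hat p_n(\cdot|w)=(\hat p_{n,\ell}(\cdot|w))_\ell$; confidence radii $\mathrm{conf}(w)\in[0,1]^L$; $\|v\|_{L,q}=(\frac1L\sum_\ell|v_\ell|^q)^{1/q}$; fixed $k,r\ge1$ and $c>1$. $E_n=\{w:\min_\ell N_{n-1,\ell}(w)>0\}$. For nonempty $w\in E_n$, $\mathsf{CanRmv}(w)=1$ iff for all $w',w''\in E_n$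 with $w\preceq w'$ and $\mathrm{par}(w)\preceq w''$: $\|d(\hat p_n(\cdot|w'),\hat p_n(\cdot|w''))\|_{L,k}\le c\|\mathrm{conf}(w')\|_{L,r}+c\|\mathrm{conf}(w'')\|_{L,r}$; otherwise $0$. PruneTree: start with $\widehat T_n=E_n$ and all nodes unexamined; while $\widehat T_n$ has an unexamined leaf $w$ ($w\neq e$), remove $w$ from $\widehat T_n$ if $\mathsf{CanRmv}(w)=1$, and mark $w$ examined; output $\widehat T_n$. *)

theory Defs
  imports Complex_Main "HOL-Library.Sublist"
begin

text \<open>Strings w = w_{-j} ... w_{-1} are lists [w_{-j}, ..., w_{-1}] (oldest symbol first).
  The suffix order w \<preceq> w' is Sublist.suffix w w'; par = tl; the empty string e is [].
  Samples: X l i is the i-th symbol (i = 1..n) of the l-th sample.\<close>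

definition par :: "'a list \<Rightarrow> 'a list" where
  "par w = tl w"

definition occ :: "(nat \<Rightarrow> 'a) \<Rightarrow> nat \<Rightarrow> 'a list \<Rightarrow> nat" where
  "occ x j w = card {i. 1 \<le> i \<and> i + length w \<le> j + 1 \<and> (\<forall>t<length w. x (i + t) = w ! t)}"

definition phat :: "(nat \<Rightarrow> nat \<Rightarrow> 'a) \<Rightarrow> nat \<Rightarrow> nat \<Rightarrow> 'a list \<Rightarrow> 'a \<Rightarrow> real" where
  "phat X n l w a = real (occ (X l) n (w @ [a])) / real (occ (X l) (n - 1) w)"

definition En :: "(nat \<Rightarrow> nat \<Rightarrow> 'a) \<Rightarrow> nat \<Rightarrow> nat \<Rightarrow> 'a list set" where
  "En X L n = {w. \<forall>l\<in>{1..L}. 0 < occ (X l) (n - 1) w}"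

definition normLq :: "nat \<Rightarrow> real \<Rightarrow> (nat \<Rightarrow> real) \<Rightarrow> real" where
  "normLq L q v = ((1 / real L) * (\<Sum>l = 1..L. \<bar>v l\<bar> powr q)) powr (1 / q)"

definition dvec :: "(nat \<Rightarrow> ('a \<Rightarrow> real) \<Rightarrow> ('a \<Rightarrow> real) \<Rightarrow> real) \<Rightarrow>
    (nat \<Rightarrow> nat \<Rightarrow> 'a) \<Rightarrow> nat \<Rightarrow> 'a list \<Rightarrow> 'a list \<Rightarrow> nat \<Rightarrow> real" where
  "dvec d X n w' w'' = (\<lambda>l. d l (phat X n l w') (phat X n l w''))"

definition prob_dist :: "('a::finite \<Rightarrow> real) \<Rightarrow> bool" where
  "prob_dist q \<longleftrightarrow> (\<forall>a. 0 \<le> q a) \<and> sum q UNIV = 1"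

definition is_metric_on :: "'b set \<Rightarrow> ('b \<Rightarrow> 'b \<Rightarrow> real) \<Rightarrow> bool" where
  "is_metric_on S m \<longleftrightarrow>
     (\<forall>p\<in>S. \<forall>q\<in>S. 0 \<le> m p q \<and> (m p q = 0 \<longleftrightarrow> p = q) \<and> m p q = m q p) \<and>
     (\<forall>p\<in>S. \<forall>q\<in>S. \<forall>s\<in>S. m p s \<le> m p q + m q s)"

definition CanRmv :: "(nat \<Rightarrow> nat \<Rightarrow> 'a) \<Rightarrow> nat \<Rightarrow> nat \<Rightarrow>
    (nat \<Rightarrow> ('a \<Rightarrow> real) \<Rightarrow> ('a \<Rightarrow> real) \<Rightarrow> real) \<Rightarrow> ('a list \<Rightarrow> nat \<Rightarrow> real) \<Rightarrow>
    real \<Rightarrow> real \<Rightarrow> real \<Rightarrow> 'a list \<Rightarrow> bool" where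
  "CanRmv X L n d conf k r c w \<longleftrightarrow>
     (\<forall>w'\<in>En X L n. \<forall>w''\<in>En X L n. suffix w w' \<longrightarrow> suffix (par w) w'' \<longrightarrow>
        normLq L k (dvec d X n w' w'') \<le> c * normLq L r (conf w') + c * normLq L r (conf w''))"

definition is_leaf :: "'a list set \<Rightarrow> 'a list \<Rightarrow> bool" where
  "is_leaf T w \<longleftrightarrow> w \<in> T \<and> (\<forall>u\<in>T. u \<noteq> [] \<longrightarrow> par u \<noteq> w)"

text \<open>One step of PruneTree on states (current tree, set of examined nodes),
  removal predicate P (= CanRmv).\<close>
inductive prune_step :: "('a list \<Rightarrow> bool) \<Rightarrow> 'a list set \<times> 'a list set \<Rightarrow> 'a list set \<times> 'a list set \<Rightarrow> bool"
  for P where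
  "\<lbrakk>is_leaf T w; w \<noteq> []; w \<notin> M\<rbrakk> \<Longrightarrow>
     prune_step P (T, M) (if P w then T - {w} else T, insert w M)"

text \<open>T is a possible output of PruneTree: reachable from (E_n, no node examined) and
  with no unexamined nonempty leaf left (any order of examination).\<close>
definition prune_output :: "(nat \<Rightarrow> nat \<Rightarrow> 'a) \<Rightarrow> nat \<Rightarrow> nat \<Rightarrow>
    (nat \<Rightarrow> ('a \<Rightarrow> real) \<Rightarrow> ('a \<Rightarrow> real) \<Rightarrow> real) \<Rightarrow> ('a list \<Rightarrow> nat \<Rightarrow> real) \<Rightarrow>
    real \<Rightarrow> real \<Rightarrow> real \<Rightarrow> 'a list set \<Rightarrow> bool" where
  "prune_output X L n d conf k r c T \<longleftrightarrow>
     (\<exists>M. (prune_step (CanRmv X L n d conf k r c))\<^sup>*\<^sup>* (En X L n, {}) (T, M) \<and>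
          \<not> (\<exists>w. is_leaf T w \<and> w \<noteq> [] \<and> w \<notin> M))"

end

theory Submission
  imports Defs
begin

lemma prune_inv:
  assumes "(prune_step P)\<^sup>*\<^sup>* (E, {}) (T, M)"
  shows "T \<subseteq> E \<and> (\<forall>w\<in>M. w \<in> T \<longrightarrow> \<not> P w)"
  using assms
proof (induction "(T, M)" arbitrary: T M rule: rtranclp_induct)
  case base then show ?case by auto
next
  case (step y T M)
  obtain T0 M0 where y: "y = (T0, M0)" by (cases y)
  from step.hyps(2)[unfolded y] show ?case
  proof cases
    case (1 w)
    with step.hyps(3)[OF y] show ?thesis by auto
  qed
qed

lemma En_len:
  assumes "w \<in> En X L n" "1 \<le> L" "w \<noteq> []"
  shows "length w < n"
proof -
  have "0 < occ (X 1) (n - 1) w" using assms unfolding En_def by auto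
  then have "{i. 1 \<le> i \<and> i + length w \<le> n - 1 + 1 \<and> (\<forall>t<length w. X 1 (i + t) = w ! t)} \<noteq> {}"
    unfolding occ_def by (metis card.empty less_irrefl)
  then obtain i where "1 \<le> i" "i + length w \<le> n - 1 + 1" by auto
  moreover have "0 < length w" using assms(3) by simp
  ultimately show ?thesis by linarith
qed

lemma phat_prob:
  fixes X :: "nat \<Rightarrow> nat \<Rightarrow> 'a::finite"
  assumes "0 < occ (X l) (n - 1) w" "1 \<le> n"
  shows "prob_dist (phat X n l w)"
proof -
  define S where "S = {i. 1 \<le> i \<and> i + length w \<le> n - 1 + 1 \<and> (\<forall>t<length w. X l (i + t) = w ! t)}"
  have "S \<subseteq> {..n+1}" unfolding S_def by auto
  then have fS: "finite S" using finite_subset by blast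
  have cS: "occ (X l) (n - 1) w = card S" unfolding occ_def S_def by simp
  have ca: "occ (X l) n (w @ [a]) = card {i \<in> S. X l (i + length w) = a}" for a
  proof -
    have "{i. 1 \<le> i \<and> i + length (w @ [a]) \<le> n + 1 \<and> (\<forall>t<length (w @ [a]). X l (i + t) = (w @ [a]) ! t)}
        = {i \<in> S. X l (i + length w) = a}"
    proof (rule set_eqI, rule iffI)
      fix i assume "i \<in> {i. 1 \<le> i \<and> i + length (w @ [a]) \<le> n + 1 \<and> (\<forall>t<length (w @ [a]). X l (i + t) = (w @ [a]) ! t)}"
      then have h: "1 \<le> i" "i + length w + 1 \<le> n + 1" "\<And>t. t < length w + 1 \<Longrightarrow> X l (i + t) = (w @ [a]) ! t" by auto
      have "\<forall>t<length w. X l (i + t) = w ! t" using h(3) by (auto simp: nth_append)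
      moreover have "X l (i + length w) = a" using h(3)[of "length w"] by simp
      ultimately show "i \<in> {i \<in> S. X l (i + length w) = a}" using h assms(2) unfolding S_def by auto
    next
      fix i assume "i \<in> {i \<in> S. X l (i + length w) = a}"
      then show "i \<in> {i. 1 \<le> i \<and> i + length (w @ [a]) \<le> n + 1 \<and> (\<forall>t<length (w @ [a]). X l (i + t) = (w @ [a]) ! t)}"
        using assms(2) unfolding S_def
        by (auto simp: nth_append less_Suc_eq)
    qed
    then show ?thesis unfolding occ_def by simp
  qed
  have sumeq: "card S = (\<Sum>a\<in>UNIV. card {i \<in> S. X l (i + length w) = a})"
    using sum_fun_comp[OF fS finite_UNIV subset_UNIV, of "\<lambda>_. (1::nat)" "\<lambda>i. X l (i + length w)"]
    by simp
  have pos: "0 < real (card S)" using assms(1) cS by simp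
  have "sum (phat X n l w) UNIV = (\<Sum>a\<in>UNIV. real (card {i \<in> S. X l (i + length w) = a}) / real (card S))"
    unfolding phat_def by (simp only: ca cS)
  also have "\<dots> = real (card S) / real (card S)"
    by (simp add: sum_divide_distrib[symmetric] sumeq)
  also have "\<dots> = 1" using pos by simp
  finally show ?thesis unfolding prob_dist_def phat_def by simp
qed

lemma suffix_tl: "suffix v u \<Longrightarrow> suffix (tl v) (tl u)"
proof -
  assume "suffix v u"
  then obtain zs where u: "u = zs @ v" by (auto simp: suffix_def)
  show ?thesis
  proof (cases zs)
    case Nil then show ?thesis using u by simp
  next
    case (Cons z zs')
    then have "tl u = zs' @ v" using u by simp
    moreover have "suffix (tl v) v" by (cases v) (auto simp: suffix_def)
    ultimately show ?thesis by (metis suffix_append suffix_order.trans)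
  qed
qed

theorem propositionA2:
  fixes X :: "nat \<Rightarrow> nat \<Rightarrow> 'a::finite"
    and L n :: nat
    and d :: "nat \<Rightarrow> ('a \<Rightarrow> real) \<Rightarrow> ('a \<Rightarrow> real) \<Rightarrow> real"
    and conf :: "'a list \<Rightarrow> nat \<Rightarrow> real"
    and k r c :: real
    and T :: "'a list set"
    and v :: "'a list"
  assumes "1 \<le> L"
    and "\<forall>l\<in>{1..L}. is_metric_on {q. prob_dist q} (d l)"
    and "\<forall>w. \<forall>l\<in>{1..L}. 0 \<le> conf w l \<and> conf w l \<le> 1"
    and "1 \<le> k" and "1 \<le> r" and "1 < c"
    and "prune_output X L n d conf k r c T"
    and "v \<in> T" and "v \<noteq> []"
  shows "\<exists>w'\<in>En X L n. \<exists>w''\<in>En X L n. suffix (par v) w' \<and> suffix v w'' \<and>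
           c * (normLq L r (conf w') + normLq L r (conf w'')) < normLq L k (dvec d X n w' w'')"
proof -
  let ?P = "CanRmv X L n d conf k r c"
  obtain M where R: "(prune_step ?P)\<^sup>*\<^sup>* (En X L n, {}) (T, M)"
    and fin: "\<not> (\<exists>w. is_leaf T w \<and> w \<noteq> [] \<and> w \<notin> M)"
    using assms(7) unfolding prune_output_def by blast
  from prune_inv[OF R] have TE: "T \<subseteq> En X L n" and MT: "\<And>w. w \<in> M \<Longrightarrow> w \<in> T \<Longrightarrow> \<not> ?P w" by auto
  have desc: "\<forall>u. n - length u = m \<longrightarrow> u \<in> T \<longrightarrow> u \<noteq> [] \<longrightarrow> (\<exists>u'. u' \<in> T \<and> u' \<in> M \<and> suffix u u')" for m
  proof (induction m rule: less_induct)
    case (less m)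
    show ?case
    proof (intro allI impI)
      fix u assume u: "n - length u = m" "u \<in> T" "u \<noteq> []"
      show "\<exists>u'. u' \<in> T \<and> u' \<in> M \<and> suffix u u'"
      proof (cases "u \<in> M")
        case True then show ?thesis using u by auto
      next
        case False
        then have "\<not> is_leaf T u" using fin u by auto
        then obtain u2 where u2: "u2 \<in> T" "u2 \<noteq> []" "par u2 = u" using u unfolding is_leaf_def by auto
        have l2: "length u2 = length u + 1" using u2 u(3) unfolding par_def by (cases u2) auto
        have "length u2 < n" using En_len[OF _ assms(1) u2(2)] TE u2 by auto
        then have "n - length u2 < m" using u(1) l2 by auto
        then obtain u' where "u' \<in> T" "u' \<in> M" "suffix u2 u'" using less u2 by blast
        moreover have "suffix u u2" using u2 unfolding par_def suffix_def
          by (metis append_Cons append_Nil list.collapse)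
        ultimately show ?thesis using suffix_order.trans by blast
      qed
    qed
  qed
  obtain u where u: "u \<in> T" "u \<in> M" "suffix v u" using desc assms(8,9) by blast
  have "\<not> ?P u" using MT u by auto
  then obtain w1 w2 where w: "w1 \<in> En X L n" "w2 \<in> En X L n" "suffix u w1" "suffix (par u) w2"
    and gt: "\<not> normLq L k (dvec d X n w1 w2) \<le> c * normLq L r (conf w1) + c * normLq L r (conf w2)"
    unfolding CanRmv_def by blast
  have n1: "1 \<le> n" using En_len[of v X L n, OF _ assms(1) assms(9)] TE assms(8) by auto
  have sym: "dvec d X n w2 w1 l = dvec d X n w1 w2 l" if l: "l \<in> {1..L}" for l
  proof -
    have p1: "prob_dist (phat X n l w1)" using phat_prob[OF _ n1] w(1) l unfolding En_def by blast
    have p2: "prob_dist (phat X n l w2)" using phat_prob[OF _ n1] w(2) l unfolding En_def by blast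
    show ?thesis using assms(2) l p1 p2 unfolding dvec_def is_metric_on_def by auto
  qed
  have neq: "normLq L k (dvec d X n w2 w1) = normLq L k (dvec d X n w1 w2)"
  proof -
    have "(\<Sum>l = 1..L. \<bar>dvec d X n w2 w1 l\<bar> powr k) = (\<Sum>l = 1..L. \<bar>dvec d X n w1 w2 l\<bar> powr k)"
      by (rule sum.cong) (use sym in auto)
    then show ?thesis unfolding normLq_def by simp
  qed
  have s1: "suffix (par v) w2" using suffix_tl[OF u(3)] w(4) unfolding par_def
    using suffix_order.trans by blast
  have s2: "suffix v w1" using u(3) w(3) suffix_order.trans by blast
  show ?thesis
    apply (rule bexI[of _ w2], rule bexI[of _ w1])
    using s1 s2 gt neq w by (auto simp: algebra_simps)
qed

end
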